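(* With probability at least $1-o_n(1)$, $\mathbf f\sim\mathcal D^{J}_{\mathrm{no}}$ is $0.2$-far from every $(n/2)$-junta, i.e. $\Pr_x[\mathbf f(x)\ne g(x)]\ge 0.2$ for every $g:\{0,1\}^n\to\{0,1\}$ depending on at most $n/2$ coordinates.
   Context: Let $n$ be even and $a=n/2$. For a set $A$ of size $a$ and $z\in\{0,1\}^A$ with Hamming weight $|z|$: $h^{(-,0)}(z)=1$ iff $|z|>a/2+0.05\sqrt a$; $h^{(-,1)}(z)=1$ iff $|z|<a/2-0.05\sqrt a$. A draw $\mathbf f\sim\mathcal D^{J}_{\mathrm{no}}$: choose $\mathbf A\subseteq[n]$ uniformly of size $a$, $\mathbf C=[n]\setminus\mathbf A$, and a uniformly random function $\mathbf b:\{0,1\}^{\mathbf C}\to\{0,1\}$; set $\mathbf f(x)=h^{(-,\mathbf b(x_{\mathbf C}))}(x_{\mathbf A})$, where $x_B$ is the restriction of $x$ to $B$. *)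

theory Defs
  imports "HOL-Probability.Probability"
begin

text \<open>Points of the cube {0,1}^n are encoded as subsets x of {..<n}
  (coordinate i is 1 iff i is in x).  Restriction x_B is x \<inter> B, and the
  Hamming weight of x_A is card (x \<inter> A).\<close>

definition cube :: "nat \<Rightarrow> nat set set" where
  "cube n = Pow {..<n}"

definition h_minus :: "nat \<Rightarrow> bool \<Rightarrow> nat set \<Rightarrow> bool" where
  "h_minus a i z =
     (if \<not> i then real (card z) > real a / 2 + 0.05 * sqrt (real a)
      else real (card z) < real a / 2 - 0.05 * sqrt (real a))"

definition noFun :: "nat \<Rightarrow> nat set \<Rightarrow> (nat set \<Rightarrow> bool) \<Rightarrow> nat set \<Rightarrow> bool" where
  "noFun n A b x = h_minus (n div 2) (b (x \<inter> ({..<n} - A))) (x \<inter> A)"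

definition D_no :: "nat \<Rightarrow> (nat set \<Rightarrow> bool) pmf" where
  "D_no n =
     do { A \<leftarrow> pmf_of_set {A. A \<subseteq> {..<n} \<and> card A = n div 2};
          b \<leftarrow> pmf_of_set (Pow ({..<n} - A) \<rightarrow>\<^sub>E (UNIV :: bool set));
          return_pmf (noFun n A b) }"

definition is_junta :: "nat \<Rightarrow> nat \<Rightarrow> (nat set \<Rightarrow> bool) \<Rightarrow> bool" where
  "is_junta n k g = (\<exists>J. J \<subseteq> {..<n} \<and> card J \<le> k \<and>
      (\<forall>x\<in>cube n. \<forall>y\<in>cube n. x \<inter> J = y \<inter> J \<longrightarrow> g x = g y))"

definition rel_dist :: "nat \<Rightarrow> (nat set \<Rightarrow> bool) \<Rightarrow> (nat set \<Rightarrow> bool) \<Rightarrow> real" where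
  "rel_dist n f g = real (card {x \<in> cube n. f x \<noteq> g x}) / 2 ^ n"

definition far_from_juntas :: "nat \<Rightarrow> real \<Rightarrow> nat \<Rightarrow> (nat set \<Rightarrow> bool) \<Rightarrow> bool" where
  "far_from_juntas n eps k f = (\<forall>g. is_junta n k g \<longrightarrow> rel_dist n f g \<ge> eps)"

end

theory Submission
  imports Defs "HOL-Real_Asymp.Real_Asymp"
begin


lemma cb_step: "(Suc k) * (2*Suc k choose Suc k) = 2*(2*k+1) * (2*k choose k)"
proof -
  have e1: "Suc k * (Suc (Suc (2*k)) choose Suc k) = Suc (Suc (2*k)) * (Suc (2*k) choose k)"
    by (rule Suc_times_binomial)
  have e2: "Suc (2*k) choose k = Suc (2*k) choose Suc k"
    using binomial_symmetric[of k "Suc (2*k)"] by (simp del: binomial_Suc_Suc)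
  have e3: "Suc k * (Suc (2*k) choose Suc k) = Suc (2*k) * (2*k choose k)"
    by (rule Suc_times_binomial)
  have "Suc k * (Suc k * (Suc (Suc (2*k)) choose Suc k)) = Suc k * (Suc (Suc (2*k)) * (Suc (2*k) choose Suc k))"
    using e1 e2 by (simp del: binomial_Suc_Suc)
  also have "\<dots> = Suc (Suc (2*k)) * (Suc k * (Suc (2*k) choose Suc k))" by (simp del: binomial_Suc_Suc)
  also have "\<dots> = Suc (Suc (2*k)) * (Suc (2*k) * (2*k choose k))" using e3 by (simp del: binomial_Suc_Suc)
  also have "\<dots> = Suc k * (2*(2*k+1) * (2*k choose k))" by (simp del: binomial_Suc_Suc)
  finally have "Suc k * (Suc (Suc (2*k)) choose Suc k) = 2*(2*k+1) * (2*k choose k)"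
    by (simp del: binomial_Suc_Suc mult_Suc)
  moreover have "2*Suc k = Suc (Suc (2*k))" by simp
  ultimately show ?thesis by (simp del: binomial_Suc_Suc mult_Suc)
qed

lemma cb_even: "real (2*k choose k)^2 * (3*k+1) \<le> 16^k"
proof (induction k)
  case 0 then show ?case by simp
next
  case (Suc k)
  define c where "c = real (2*k choose k)"
  define d where "d = real (2*Suc k choose Suc k)"
  have st: "(real k + 1) * d = 2*(2*k+1) * c"
    using arg_cong[OF cb_step[of k], of real] unfolding c_def d_def by (simp del: binomial_Suc_Suc mult_Suc_right add: algebra_simps)
  have ih: "c^2 * (3*k+1) \<le> 16^k" using Suc.IH unfolding c_def by simp
  have poly: "(2*real k+1)^2*(3*k+4) \<le> 4*(real k+1)^2*(3*k+1)"
    by (simp add: power2_eq_square algebra_simps)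
  have "(real k + 1)^2 * (d^2 * (3*k+4)) = ((real k + 1) * d)^2 * (3*k+4)"
    by (simp add: power2_eq_square algebra_simps)
  also have "\<dots> = 4*c^2 * ((2*real k+1)^2*(3*k+4))"
    unfolding st by (simp add: power2_eq_square algebra_simps)
  also have "\<dots> \<le> 4*c^2 * (4*(real k+1)^2*(3*k+1))"
    by (intro mult_left_mono poly) (simp)
  also have "\<dots> = 16 * (real k+1)^2 * (c^2*(3*k+1))" by (simp add: algebra_simps)
  also have "\<dots> \<le> 16 * (real k+1)^2 * 16^k"
    by (intro mult_left_mono ih) simp
  finally have "(real k + 1)^2 * (d^2 * (3*k+4)) \<le> (real k + 1)^2 * 16^Suc k" by simp
  hence "d^2 * (3*k+4) \<le> 16^Suc k"
    by (rule mult_left_le_imp_le) simp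
  thus ?case unfolding d_def by (simp del: binomial_Suc_Suc mult_Suc_right add: algebra_simps)
qed

lemma cb_gen: "real (m choose (m div 2))^2 * (3*m) \<le> 2*4^m"
proof (cases "even m")
  case True
  then obtain k where m: "m = 2*k" by blast
  have "real (2*k choose k)^2 * (3*k+1) \<le> 16^k" by (rule cb_even)
  moreover have "(16::real)^k = 4^m" unfolding m by (simp add: power_mult)
  moreover have "real (2*k choose k)^2 * (3*m) \<le> 2 * (real (2*k choose k)^2 * (3*k+1))"
  proof -
    have "real (2*k choose k)^2 * real (3*(2*k)) \<le> real (2*k choose k)^2 * (2*(3*k+1))"
      by (rule mult_left_mono) auto
    thus ?thesis unfolding m by (simp add: algebra_simps)
  qed
  moreover have "m div 2 = k" using m by simp
  ultimately show ?thesis unfolding m by (simp only:)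
next
  case False
  then obtain k where m: "m = 2*k+1" using oddE by blast
  have md: "m div 2 = k" using m by simp
  have e: "2*Suc k choose Suc k = 2 * (2*k+1 choose k)"
  proof -
    have "2*Suc k choose Suc k = (Suc (2*k) choose k) + (Suc (2*k) choose Suc k)"
      by (simp del: binomial_Suc_Suc add: binomial_Suc_Suc[symmetric])
    also have "Suc (2*k) choose Suc k = Suc (2*k) choose k"
      using binomial_symmetric[of k "Suc (2*k)"] by (simp del: binomial_Suc_Suc)
    finally show ?thesis by simp
  qed
  have "real (2*Suc k choose Suc k)^2 * (3*Suc k+1) \<le> 16^Suc k" by (rule cb_even)
  moreover have "(16::real)^Suc k = 4 * 4^m"
  proof -
    have "(16::real)^Suc k = (4^2)^Suc k" by simp
    also have "\<dots> = 4^(2*Suc k)" by (simp only: power_mult)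
    also have "2*Suc k = Suc m" using m by simp
    finally show ?thesis by simp
  qed
  ultimately have "4 * (real (2*k+1 choose k)^2 * (3*k+4)) \<le> 4 * 4^m"
    unfolding e by (simp add: algebra_simps del: binomial_Suc_Suc)
  hence h: "real (2*k+1 choose k)^2 * (3*k+4) \<le> 4^m" by simp
  have "real (2*k+1 choose k)^2 * (3*m) \<le> 2 * (real (2*k+1 choose k)^2 * (3*k+4))"
  proof -
    have "real (2*k+1 choose k)^2 * real (3*(2*k+1)) \<le> real (2*k+1 choose k)^2 * (2*(3*k+4))"
      by (rule mult_left_mono) auto
    thus ?thesis unfolding m by (simp add: algebra_simps)
  qed
  moreover have "m choose k = 2*k+1 choose k" using m by simp
  ultimately show ?thesis using h by (simp only: md)
qed

definition outs :: "nat \<Rightarrow> nat set \<Rightarrow> bool" where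
  "outs m z = (real (card z) > real m/2 + 0.05* sqrt(real m) \<or> real(card z) < real m/2 - 0.05* sqrt(real m))"

lemma card_nat_window:
  fixes K :: "nat set" and w :: real
  assumes "finite K" "\<And>a b. a \<in> K \<Longrightarrow> b \<in> K \<Longrightarrow> real b - real a \<le> w" "w \<ge> 0"
  shows "real (card K) \<le> w + 1"
proof (cases "K = {}")
  case True then show ?thesis using assms by simp
next
  case False
  define a where "a = Min K"
  define b where "b = Max K"
  have aK: "a \<in> K" and bK: "b \<in> K" using False assms(1) unfolding a_def b_def by auto
  have "K \<subseteq> {a..b}" using assms(1) unfolding a_def b_def by auto
  hence "card K \<le> card {a..b}" by (intro card_mono) auto
  also have "card {a..b} = Suc b - a" by simp
  finally have c: "card K \<le> Suc b - a" .
  have ab: "a \<le> b" using aK bK assms(1) unfolding a_def b_def by auto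
  have "real (Suc b - a) = real b - real a + 1" using ab by (simp add: of_nat_diff)
  also have "\<dots> \<le> w + 1" using assms(2)[OF aK bK] by simp
  finally show ?thesis using c by (meson of_nat_le_iff order_trans)
qed

lemma band_card:
  assumes fA: "finite A" and cA: "card A = m"
  shows "real (card {z. z \<subseteq> A \<and> \<not> outs m z}) \<le> (0.1* sqrt m + 1) * real (m choose (m div 2))"
proof -
  define t where "t = 0.05* sqrt (real m)"
  define K where "K = {k. k \<le> m \<and> real m/2 - t \<le> real k \<and> real k \<le> real m/2 + t}"
  have fK: "finite K" unfolding K_def by auto
  have eq: "{z. z \<subseteq> A \<and> \<not> outs m z} = (\<Union>k\<in>K. {z. z \<subseteq> A \<and> card z = k})"
  proof (intro equalityI subsetI)
    fix z assume "z \<in> {z. z \<subseteq> A \<and> \<not> outs m z}"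
    hence z: "z \<subseteq> A" "\<not> outs m z" by auto
    have "card z \<le> m" using card_mono[OF fA z(1)] cA by simp
    thus "z \<in> (\<Union>k\<in>K. {z. z \<subseteq> A \<and> card z = k})"
      using z unfolding K_def outs_def t_def by auto
  next
    fix z assume "z \<in> (\<Union>k\<in>K. {z. z \<subseteq> A \<and> card z = k})"
    thus "z \<in> {z. z \<subseteq> A \<and> \<not> outs m z}" unfolding K_def outs_def t_def by auto
  qed
  have "card {z. z \<subseteq> A \<and> \<not> outs m z} \<le> (\<Sum>k\<in>K. card {z. z \<subseteq> A \<and> card z = k})"
    unfolding eq by (rule card_UN_le[OF fK])
  also have "\<dots> = (\<Sum>k\<in>K. m choose k)"
    using n_subsets[OF fA] cA by simp
  also have "\<dots> \<le> (\<Sum>k\<in>K. m choose (m div 2))"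
    by (intro sum_mono binomial_maximum)
  also have "\<dots> = card K * (m choose (m div 2))" by simp
  finally have "real (card {z. z \<subseteq> A \<and> \<not> outs m z}) \<le> real (card K) * real (m choose (m div 2))"
    by (metis of_nat_le_iff of_nat_mult)
  also have "\<dots> \<le> (0.1* sqrt m + 1) * real (m choose (m div 2))"
  proof (rule mult_right_mono)
    show "real (card K) \<le> 0.1 * sqrt (real m) + 1"
      using card_nat_window[OF fK, of "2*t"] unfolding K_def t_def by force
  qed simp
  finally show ?thesis .
qed

lemma central_small:
  assumes m: "m \<ge> 10000"
  shows "(0.1 * sqrt m + 1) * real (m choose (m div 2)) \<le> 0.1 * 2^m"
proof -
  define s where "s = sqrt (real m)"
  define C where "C = real (m choose (m div 2))"
  have s2: "s^2 = real m" unfolding s_def by simp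
  have s100: "s \<ge> 100"
  proof -
    have "sqrt (real 10000) \<le> s" unfolding s_def using m by (subst real_sqrt_le_iff) simp
    moreover have "sqrt (real 10000) = 100" by (simp add: real_sqrt_eq_iff power2_eq_square[symmetric]) 
    ultimately show ?thesis by simp
  qed
  have cb: "C^2 * (3* s^2) \<le> 2*4^m" using cb_gen[of m] unfolding C_def s2 by simp
  have C0: "C \<ge> 0" unfolding C_def by simp
  have poly: "2*(0.1* s+1)^2 \<le> 0.03 * s^2"
  proof -
    have "s* s - 40* s - 200 \<ge> 0"
    proof -
      have "s* s - 40* s - 200 = s*(s-40) - 200" by (simp add: algebra_simps)
      moreover have "s*(s-40) \<ge> 100*60" using s100 by (intro mult_mono) auto
      ultimately show ?thesis by simp
    qed
    thus ?thesis by (simp add: power2_eq_square algebra_simps)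
  qed
  have "((0.1* s+1)*C)^2 * (3* s^2) = (0.1* s+1)^2 * (C^2*(3* s^2))" by (simp add: power2_eq_square algebra_simps)
  also have "\<dots> \<le> (0.1* s+1)^2 * (2*4^m)" by (intro mult_left_mono cb) simp
  also have "\<dots> = (2*(0.1* s+1)^2) * 4^m" by simp
  also have "\<dots> \<le> (0.03* s^2) * 4^m" by (intro mult_right_mono poly) simp
  also have "\<dots> = (0.1*2^m)^2 * (3* s^2)" by (simp add: power_mult_distrib power2_eq_square algebra_simps flip: power_mult_distrib)
  finally have "((0.1* s+1)*C)^2 \<le> (0.1*2^m)^2"
    using s100 by (subst (asm) mult_le_cancel_right) (auto simp: power2_eq_square)
  hence "(0.1* s+1)*C \<le> 0.1*2^m" by (rule power2_le_imp_le) simp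
  thus ?thesis unfolding s_def C_def .
qed

lemma Nout_bound:
  assumes fA: "finite A" and cA: "card A = m" and m: "m \<ge> 10000"
  shows "real (card {z. z \<subseteq> A \<and> outs m z}) \<ge> 0.9 * 2^m"
proof -
  have u: "Pow A = {z. z \<subseteq> A \<and> outs m z} \<union> {z. z \<subseteq> A \<and> \<not> outs m z}" by auto
  have "card (Pow A) = card {z. z \<subseteq> A \<and> outs m z} + card {z. z \<subseteq> A \<and> \<not> outs m z}"
    unfolding u using fA by (intro card_Un_disjoint) auto
  hence "(2::nat)^m = card {z. z \<subseteq> A \<and> outs m z} + card {z. z \<subseteq> A \<and> \<not> outs m z}"
    using fA cA by (simp add: card_Pow)
  hence "real ((2::nat)^m) = real (card {z. z \<subseteq> A \<and> outs m z}) + real (card {z. z \<subseteq> A \<and> \<not> outs m z})"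
    by (metis of_nat_add)
  hence "real (card {z. z \<subseteq> A \<and> outs m z}) = 2^m - real (card {z. z \<subseteq> A \<and> \<not> outs m z})"
    by simp
  moreover have "real (card {z. z \<subseteq> A \<and> \<not> outs m z}) \<le> 0.1 * 2^m"
    using band_card[OF fA cA] central_small[OF m] by linarith
  ultimately show ?thesis by simp
qed

lemma pair_strong:
  assumes fU: "finite U" and SU: "S \<subseteq> U"
    and h: "\<And>x. x \<in> S \<Longrightarrow> \<sigma> x \<in> U \<and> \<sigma> x \<notin> S \<and> \<sigma> (\<sigma> x) = x \<and> f x \<noteq> f (\<sigma> x) \<and> g x = g (\<sigma> x)"
  shows "card S \<le> card {x\<in>U. f x \<noteq> g x}"
proof -
  define E where "E = {x\<in>U. f x \<noteq> g x}"
  have fE: "finite E" using fU unfolding E_def by auto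
  have "S \<subseteq> (E \<inter> S) \<union> \<sigma> ` (E - S)"
  proof
    fix x assume x: "x \<in> S"
    show "x \<in> (E \<inter> S) \<union> \<sigma> ` (E - S)"
    proof (cases "x \<in> E")
      case True then show ?thesis using x by auto
    next
      case False
      hence "\<sigma> x \<in> E" using h[OF x] x SU unfolding E_def by auto
      moreover have "\<sigma> x \<notin> S" "x = \<sigma> (\<sigma> x)" using h[OF x] by auto
      ultimately show ?thesis by blast
    qed
  qed
  hence "card S \<le> card ((E \<inter> S) \<union> \<sigma> ` (E - S))" using fE by (intro card_mono) auto
  also have "\<dots> \<le> card (E \<inter> S) + card (\<sigma> ` (E - S))" by (rule card_Un_le)
  also have "\<dots> \<le> card (E \<inter> S) + card (E - S)" using fE by (intro add_left_mono card_image_le) auto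
  also have "\<dots> = card E" using fE by (metis Diff_Diff_Int Int_commute card_Diff_subset_Int Int_lower1 card_Int_Diff finite_Int)
  finally show ?thesis unfolding E_def .
qed

lemma pair_weak:
  assumes fU: "finite U" and SU: "S \<subseteq> U"
    and h: "\<And>x. x \<in> S \<Longrightarrow> \<sigma> x \<in> U \<and> \<sigma> (\<sigma> x) = x \<and> f x \<noteq> f (\<sigma> x) \<and> g x = g (\<sigma> x)"
  shows "card S \<le> 2 * card {x\<in>U. f x \<noteq> g x}"
proof -
  define E where "E = {x\<in>U. f x \<noteq> g x}"
  have fE: "finite E" using fU unfolding E_def by auto
  have "S \<subseteq> E \<union> \<sigma> ` E"
  proof
    fix x assume x: "x \<in> S"
    show "x \<in> E \<union> \<sigma> ` E"
    proof (cases "x \<in> E")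
      case True then show ?thesis by auto
    next
      case False
      hence "\<sigma> x \<in> E" using h[OF x] x SU unfolding E_def by auto
      moreover have "x = \<sigma> (\<sigma> x)" using h[OF x] by auto
      ultimately show ?thesis by blast
    qed
  qed
  hence "card S \<le> card (E \<union> \<sigma> ` E)" using fE by (intro card_mono) auto
  also have "\<dots> \<le> card E + card (\<sigma> ` E)" by (rule card_Un_le)
  also have "\<dots> \<le> card E + card E" using fE by (intro add_left_mono card_image_le) auto
  finally show ?thesis unfolding E_def by simp
qed

lemma card_split:
  assumes dis: "A \<inter> C = {}" and fA: "finite A" and fC: "finite C"
  shows "card {x. x \<subseteq> A \<union> C \<and> P (x \<inter> C) \<and> Q (x \<inter> A)} = card {y. y \<subseteq> C \<and> P y} * card {z. z \<subseteq> A \<and> Q z}"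
proof -
  define Y where "Y = {y. y \<subseteq> C \<and> P y}"
  define Z where "Z = {z. z \<subseteq> A \<and> Q z}"
  have eq: "{x. x \<subseteq> A \<union> C \<and> P (x \<inter> C) \<and> Q (x \<inter> A)} = (\<lambda>(y,z). y \<union> z) ` (Y \<times> Z)"
  proof (intro equalityI subsetI)
    fix x assume "x \<in> {x. x \<subseteq> A \<union> C \<and> P (x \<inter> C) \<and> Q (x \<inter> A)}"
    hence x: "x \<subseteq> A \<union> C" "P (x \<inter> C)" "Q (x \<inter> A)" by auto
    have "x = (\<lambda>(y,z). y \<union> z) (x \<inter> C, x \<inter> A)" using x(1) by auto
    moreover have "(x \<inter> C, x \<inter> A) \<in> Y \<times> Z" using x unfolding Y_def Z_def by auto
    ultimately show "x \<in> (\<lambda>(y,z). y \<union> z) ` (Y \<times> Z)" by blast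
  next
    fix x assume "x \<in> (\<lambda>(y,z). y \<union> z) ` (Y \<times> Z)"
    then obtain y z where x: "x = y \<union> z" "y \<in> Y" "z \<in> Z" by auto
    have "x \<inter> C = y" "x \<inter> A = z" using x dis unfolding Y_def Z_def by auto
    thus "x \<in> {x. x \<subseteq> A \<union> C \<and> P (x \<inter> C) \<and> Q (x \<inter> A)}" using x unfolding Y_def Z_def by auto
  qed
  have inj: "inj_on (\<lambda>(y,z). y \<union> z) (Y \<times> Z)"
  proof (rule inj_onI, clarify)
    fix y z y' z' assume "y \<in> Y" "z \<in> Z" "y' \<in> Y" "z' \<in> Z" "y \<union> z = y' \<union> z'"
    moreover have "(y \<union> z) \<inter> C = y" "(y' \<union> z') \<inter> C = y'" "(y \<union> z) \<inter> A = z" "(y' \<union> z') \<inter> A = z'"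
      using calculation dis unfolding Y_def Z_def by auto
    ultimately show "y = y' \<and> z = z'" by metis
  qed
  show ?thesis unfolding eq using card_image[OF inj] by (simp add: card_cartesian_product Y_def Z_def)
qed

lemma h_diff_b:
  assumes "outs a z" "i \<noteq> j" shows "h_minus a i z \<noteq> h_minus a j z"
proof -
  have "sqrt (real a) \<ge> 0" by simp
  thus ?thesis using assms unfolding outs_def h_minus_def by (cases i; cases j; simp; linarith)
qed

lemma h_diff_compl:
  assumes "outs a z" "card z + card z' = a" shows "h_minus a i z \<noteq> h_minus a i z'"
proof -
  have s: "sqrt (real a) \<ge> 0" by simp
  have "real (card z) + real (card z') = real a" using assms(2) by (metis of_nat_add)
  thus ?thesis using assms(1) s unfolding outs_def h_minus_def by (cases i; simp; linarith)
qed


lemma far_det: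
  assumes m: "m \<ge> 10000" and Asub: "A \<subseteq> {..<2*m}" and cA: "card A = m"
    and good: "\<forall>c\<in>{..<2*m} - A. real (card {y. y \<subseteq> {..<2*m} - A \<and> c \<in> y \<and> b y \<noteq> b (y - {c})}) \<ge> 0.45 * 2^(m-1)"
  shows "far_from_juntas (2*m) 0.2 m (noFun (2*m) A b)"
  unfolding far_from_juntas_def
proof (intro allI impI)
  fix g assume "is_junta (2*m) m g"
  then obtain J where J: "J \<subseteq> {..<2*m}" "card J \<le> m"
    and inv0: "\<forall>x\<in>cube (2*m). \<forall>y\<in>cube (2*m). x \<inter> J = y \<inter> J \<longrightarrow> g x = g y"
    unfolding is_junta_def by (elim exE conjE) (rule that)
  have inv: "g x = g y" if "x \<in> cube (2*m)" "y \<in> cube (2*m)" "x \<inter> J = y \<inter> J" for x y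
    using inv0 that by blast
  define C where "C = {..<2*m} - A"
  define U where "U = cube (2*m)"
  define f where "f = noFun (2*m) A b"
  define E where "E = {x\<in>U. f x \<noteq> g x}"
  have fx: "f x = h_minus m (b (x \<inter> C)) (x \<inter> A)" for x
    unfolding f_def noFun_def C_def by simp
  have fU: "finite U" unfolding U_def cube_def by simp
  have fA: "finite A" using Asub finite_subset by blast
  have fC: "finite C" unfolding C_def by simp
  have cC: "card C = m" unfolding C_def using Asub cA by (simp add: card_Diff_subset fA)
  have dis: "A \<inter> C = {}" unfolding C_def by auto
  have AC: "A \<union> C = {..<2*m}" unfolding C_def using Asub by auto
  have U_eq: "U = {x. x \<subseteq> A \<union> C}" unfolding U_def cube_def AC by auto
  have Nout: "real (card {z. z \<subseteq> A \<and> outs m z}) \<ge> 0.9 * 2^m" by (rule Nout_bound[OF fA cA m])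
  have m1: "(2::real)^m = 2 * 2^(m-1)"
  proof -
    have "m = Suc (m - 1)" using m by simp
    then show ?thesis by (metis power.simps(2))
  qed
  have pw: "(2::real)^(2*m) = 2^m * 2^m" by (simp add: mult_2 power_add)
  have rd: "rel_dist (2*m) f g = real (card E) / 2^(2*m)"
    unfolding rel_dist_def E_def U_def by simp
  show "0.2 \<le> rel_dist (2*m) (noFun (2*m) A b) g"
  proof (cases "C \<subseteq> J")
    case False
    then obtain c where c: "c \<in> C" "c \<notin> J" by auto
    have cA': "c \<notin> A" using c dis by auto
    define P where "P = (\<lambda>y. c \<in> y \<and> b y \<noteq> b (y - {c}))"
    define S where "S = {x. x \<subseteq> A \<union> C \<and> P (x \<inter> C) \<and> outs m (x \<inter> A)}"
    have cardS: "card S = card {y. y \<subseteq> C \<and> P y} * card {z. z \<subseteq> A \<and> outs m z}"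
      unfolding S_def by (rule card_split[OF dis fA fC])
    have "card S \<le> card E" unfolding E_def
    proof (rule pair_strong[OF fU, where \<sigma> = "\<lambda>x. if c \<in> x then x - {c} else insert c x"])
      show "S \<subseteq> U" unfolding S_def U_eq by auto
      fix x assume x: "x \<in> S"
      have xU: "x \<subseteq> A \<union> C" and Px: "P (x \<inter> C)" and ox: "outs m (x \<inter> A)" using x unfolding S_def by auto
      have cx: "c \<in> x" using Px unfolding P_def by auto
      have e1: "(x - {c}) \<inter> C = x \<inter> C - {c}" by auto
      have e2: "(x - {c}) \<inter> A = x \<inter> A" using cA' by auto
      have "f x \<noteq> f (x - {c})" unfolding fx e1 e2
        by (rule h_diff_b[OF ox]) (use Px in \<open>auto simp: P_def Diff_Int_distrib2\<close>)
      moreover have "g x = g (x - {c})"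
        by (rule inv) (use xU c(2) in \<open>auto simp: U_eq[unfolded U_def]\<close>)
      moreover have "x - {c} \<notin> S" unfolding S_def P_def by auto
      moreover have "x - {c} \<in> U" using xU unfolding U_eq by auto
      moreover have "insert c (x - {c}) = x" using cx by auto
      ultimately show "(if c \<in> x then x - {c} else insert c x) \<in> U \<and> (if c \<in> x then x - {c} else insert c x) \<notin> S \<and>
        (if c \<in> (if c \<in> x then x - {c} else insert c x) then (if c \<in> x then x - {c} else insert c x) - {c} else insert c (if c \<in> x then x - {c} else insert c x)) = x \<and>
        f x \<noteq> f (if c \<in> x then x - {c} else insert c x) \<and> g x = g (if c \<in> x then x - {c} else insert c x)"
        using cx by simp
    qed
    hence "real (card S) \<le> real (card E)" by simp
    moreover have "real (card {y. y \<subseteq> C \<and> P y}) \<ge> 0.45 * 2^(m-1)"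
      using good c(1) unfolding C_def P_def by auto
    moreover have "(0.45 * 2^(m-1)) * (0.9 * 2^m) \<le> real (card {y. y \<subseteq> C \<and> P y}) * real (card {z. z \<subseteq> A \<and> outs m z})"
      by (rule mult_mono) (use calculation Nout in auto)
    ultimately have "real (card E) \<ge> (0.45 * 2^(m-1)) * (0.9 * 2^m)"
      unfolding cardS of_nat_mult by linarith
    hence "real (card E) \<ge> 0.2 * 2^(2*m)" unfolding pw using m1 by simp
    thus ?thesis unfolding rd[unfolded f_def] by (simp add: field_simps)
  next
    case True
    have JC: "J = C" using card_seteq[OF finite_subset[OF J(1)] True] J(2) cC by simp
    define S where "S = {x. x \<subseteq> A \<union> C \<and> (\<lambda>_. True) (x \<inter> C) \<and> outs m (x \<inter> A)}"
    have cardS: "card S = card {y. y \<subseteq> C \<and> (\<lambda>_. True) y} * card {z. z \<subseteq> A \<and> outs m z}"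
      unfolding S_def by (rule card_split[OF dis fA fC])
    have cPC: "card {y. y \<subseteq> C \<and> (\<lambda>_. True) y} = 2^m" using card_Pow[of C] cC fC by (simp add: Pow_def)
    have "card S \<le> 2 * card E" unfolding E_def
    proof (rule pair_weak[OF fU, where \<sigma> = "\<lambda>x. (x - A) \<union> (A - x)"])
      show "S \<subseteq> U" unfolding S_def U_eq by auto
      fix x assume x: "x \<in> S"
      have xU: "x \<subseteq> A \<union> C" and ox: "outs m (x \<inter> A)" using x unfolding S_def by auto
      have e1: "((x - A) \<union> (A - x)) \<inter> C = x \<inter> C" using dis by auto
      have e2: "((x - A) \<union> (A - x)) \<inter> A = A - x" by auto
      have cc: "card (x \<inter> A) + card (A - x) = m"
        using card_Int_Diff[OF fA, of x] cA by (simp add: Int_commute)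
      have "f x \<noteq> f ((x - A) \<union> (A - x))" unfolding fx e1 e2
        by (rule h_diff_compl[OF ox cc])
      moreover have "g x = g ((x - A) \<union> (A - x))"
        by (rule inv) (use xU dis JC in \<open>auto simp: U_eq[unfolded U_def]\<close>)
      moreover have "(x - A) \<union> (A - x) \<in> U" using xU unfolding U_eq by auto
      moreover have "((x - A) \<union> (A - x) - A) \<union> (A - ((x - A) \<union> (A - x))) = x" by auto
      ultimately show "(x - A) \<union> (A - x) \<in> U \<and> ((x - A) \<union> (A - x) - A) \<union> (A - ((x - A) \<union> (A - x))) = x \<and> f x \<noteq> f ((x - A) \<union> (A - x)) \<and> g x = g ((x - A) \<union> (A - x))"
        by auto
    qed
    hence "real (card S) \<le> 2 * real (card E)" by simp
    hence "2^m * (0.9 * 2^m) \<le> 2 * real (card E)"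
    proof -
      have "2^m * (0.9 * 2^m) \<le> (2::real)^m * real (card {z. z \<subseteq> A \<and> outs m z})"
        by (rule mult_left_mono) (use Nout in auto)
      moreover have "real (card S) = (2::real)^m * real (card {z. z \<subseteq> A \<and> outs m z})"
        unfolding cardS cPC by simp
      ultimately show ?thesis using \<open>real (card S) \<le> 2 * real (card E)\<close> by linarith
    qed
    hence "real (card E) \<ge> 0.2 * 2^(2*m)" unfolding pw by simp
    thus ?thesis unfolding rd[unfolded f_def] by (simp add: field_simps)
  qed
qed

lemma unif_fun_Pi:
  assumes "finite I"
  shows "pmf_of_set (I \<rightarrow>\<^sub>E (UNIV::bool set)) = Pi_pmf I undefined (\<lambda>_. bernoulli_pmf (1/2))"
proof -
  have "Pi_pmf I undefined (\<lambda>_. bernoulli_pmf (1/2)) = Pi_pmf I undefined (\<lambda>_. pmf_of_set (UNIV::bool set))"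
    by (simp add: bernoulli_pmf_half_conv_pmf_of_set)
  also have "\<dots> = pmf_of_set (PiE_dflt I undefined (\<lambda>_. UNIV))"
    using assms by (intro Pi_pmf_of_set) auto
  also have "PiE_dflt I undefined (\<lambda>_. UNIV) = (I \<rightarrow>\<^sub>E (UNIV::bool set))"
    by (auto simp: PiE_dflt_def PiE_def extensional_def)
  finally show ?thesis by simp
qed

lemma card_T:
  assumes fC: "finite C" and c: "c \<in> C" and cC: "card C = m"
  shows "card {y. y \<subseteq> C \<and> c \<in> y} = 2^(m-1)"
proof -
  have "{y. y \<subseteq> C \<and> c \<in> y} = insert c ` Pow (C - {c})"
  proof (intro equalityI subsetI)
    fix y assume "y \<in> {y. y \<subseteq> C \<and> c \<in> y}"
    hence "y = insert c (y - {c})" "y - {c} \<in> Pow (C - {c})" by auto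
    thus "y \<in> insert c ` Pow (C - {c})" by blast
  qed (use c in auto)
  moreover have "inj_on (insert c) (Pow (C - {c}))"
    by (rule inj_onI) (metis Diff_insert_absorb PowD insert_subset subset_Diff_insert)
  ultimately have "card {y. y \<subseteq> C \<and> c \<in> y} = card (Pow (C - {c}))" by (simp add: card_image)
  also have "\<dots> = 2^(m-1)" using fC c cC by (simp add: card_Pow)
  finally show ?thesis .
qed

lemma prob_bad:
  assumes fC: "finite C" and c: "c \<in> C" and cC: "card C = m"
  shows "measure_pmf.prob (pmf_of_set (Pow C \<rightarrow>\<^sub>E (UNIV::bool set)))
           {b. real (card {y. y \<subseteq> C \<and> c \<in> y \<and> b y \<noteq> b (y - {c})}) < 0.45 * 2^(m-1)}
         \<le> exp (- (2^(m-1)) / 200)"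
proof -
  define F where "F = Pow C \<rightarrow>\<^sub>E (UNIV::bool set)"
  define T where "T = {y. y \<subseteq> C \<and> c \<in> y}"
  define N where "N = card T"
  have N: "N = 2^(m-1)" unfolding N_def T_def by (rule card_T[OF fC c cC])
  have fPC: "finite (Pow C)" using fC by simp
  have fT: "finite T" unfolding T_def using fC by simp
  have TP: "T \<subseteq> Pow C" unfolding T_def by auto
  define \<Phi> where "\<Phi> = (\<lambda>b y. if y \<in> Pow C then (if c \<in> y then b y \<noteq> b (y - {c}) else b y) else undefined)"
  have \<Phi>F: "\<Phi> b \<in> F" for b unfolding \<Phi>_def F_def by auto
  have \<Phi>\<Phi>: "\<Phi> (\<Phi> b) = b" if "b \<in> F" for b
  proof
    fix y show "\<Phi> (\<Phi> b) y = b y"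
      using that unfolding \<Phi>_def F_def by (auto simp: PiE_def extensional_def)
  qed
  have bij: "bij_betw \<Phi> F F" by (rule bij_betwI[of _ _ _ \<Phi>]) (use \<Phi>F \<Phi>\<Phi> in auto)
  have Fne: "F \<noteq> {}" unfolding F_def by (simp add: PiE_eq_empty_iff)
  have fF: "finite F" unfolding F_def using fPC by (simp add: finite_PiE)
  have mapF: "map_pmf \<Phi> (pmf_of_set F) = pmf_of_set F"
    by (rule map_pmf_of_set_bij_betw[OF bij Fne fF])
  define Q where "Q = (\<lambda>k::nat. real k < 0.45 * 2^(m-1))"
  have K_eq: "card {y. y \<subseteq> C \<and> c \<in> y \<and> b y \<noteq> b (y - {c})} = card {y\<in>T. \<Phi> b y}" for b
  proof -
    have "{y. y \<subseteq> C \<and> c \<in> y \<and> b y \<noteq> b (y - {c})} = {y\<in>T. \<Phi> b y}"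
      unfolding T_def \<Phi>_def by auto
    thus ?thesis by simp
  qed
  have "measure_pmf.prob (pmf_of_set F) {b. real (card {y. y \<subseteq> C \<and> c \<in> y \<and> b y \<noteq> b (y - {c})}) < 0.45 * 2^(m-1)}
      = measure_pmf.prob (pmf_of_set F) (\<Phi> -` {b. Q (card {y\<in>T. b y})})"
    unfolding K_eq Q_def by (simp add: vimage_def)
  also have "\<dots> = measure_pmf.prob (map_pmf \<Phi> (pmf_of_set F)) {b. Q (card {y\<in>T. b y})}"
    by (simp add: measure_map_pmf)
  also have "\<dots> = measure_pmf.prob (Pi_pmf (Pow C) undefined (\<lambda>_. bernoulli_pmf (1/2))) {b. Q (card {y\<in>T. b y})}"
    by (simp only: mapF) (simp add: F_def unif_fun_Pi[OF fPC])
  also have "\<dots> = measure_pmf.prob (map_pmf (\<lambda>f x. if x \<in> T then f x else undefined) (Pi_pmf (Pow C) undefined (\<lambda>_. bernoulli_pmf (1/2)))) {b. Q (card {y\<in>T. b y})}"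
  proof -
    have "\<And>x. {y\<in>T. (if y \<in> T then x y else undefined)} = {y\<in>T. x y}" by auto
    thus ?thesis by (simp add: measure_map_pmf vimage_def)
  qed
  also have "\<dots> = measure_pmf.prob (Pi_pmf T undefined (\<lambda>_. bernoulli_pmf (1/2))) {b. Q (card {y\<in>T. b y})}"
    by (subst Pi_pmf_subset[OF fPC TP]) (rule refl)
  also have "\<dots> = measure_pmf.prob (map_pmf (\<lambda>f. card {y\<in>T. f y}) (Pi_pmf T undefined (\<lambda>_. bernoulli_pmf (1/2)))) {k. Q k}"
    by (simp add: measure_map_pmf vimage_def)
  also have "map_pmf (\<lambda>f. card {y\<in>T. f y}) (Pi_pmf T undefined (\<lambda>_. bernoulli_pmf (1/2))) = binomial_pmf N (1/2)"
    by (rule binomial_pmf_altdef'[symmetric]) (use fT N_def in auto)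
  also have "measure_pmf.prob (binomial_pmf N (1/2)) {k. Q k} \<le> measure_pmf.prob (binomial_pmf N (1/2)) {k. real k \<le> real N * (1/2) - 0.05 * N}"
    by (intro measure_pmf.finite_measure_mono) (auto simp: Q_def N)
  also have "\<dots> \<le> exp (- 2 * (0.05 * N)^2 / real N)"
  proof (rule binomial_distribution.prob_le)
    show "binomial_distribution (1/2)" by unfold_locales auto
    show "0 < N" unfolding N by simp
  qed simp
  also have "- 2 * (0.05 * N)^2 / real N = - (2^(m-1)) / 200"
    unfolding N by (simp add: power2_eq_square field_simps)
  finally show ?thesis unfolding F_def .
qed

lemma lim1: "(\<lambda>m::nat. 1 - real m * exp (- (2^m) / 400)) \<longlonglongrightarrow> 1"
  by real_asymp

lemma bind_lower:
  assumes "\<And>x. x \<in> set_pmf M \<Longrightarrow> p \<le> measure_pmf.prob (N x) X"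
  shows "p \<le> measure_pmf.prob (bind_pmf M N) X"
proof (cases "p \<le> 0")
  case True then show ?thesis by (meson measure_nonneg order_trans)
next
  case False
  have "ennreal p = (\<integral>\<^sup>+x. ennreal p \<partial>M)" by (simp add: measure_pmf.emeasure_space_1)
  also have "\<dots> \<le> (\<integral>\<^sup>+x. emeasure (N x) X \<partial>M)"
  proof (rule nn_integral_mono_AE, rule AE_pmfI)
    fix x assume "x \<in> set_pmf M"
    thus "ennreal p \<le> emeasure (measure_pmf (N x)) X"
      using assms by (simp add: measure_pmf.emeasure_eq_measure)
  qed
  also have "\<dots> = emeasure (bind_pmf M N) X" by simp
  also have "\<dots> = ennreal (measure_pmf.prob (bind_pmf M N) X)" by (simp add: measure_pmf.emeasure_eq_measure)
  finally show ?thesis using False by (simp add: ennreal_le_iff2)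
qed


lemma per_A:
  assumes m: "m \<ge> 10000" and Asub: "A \<subseteq> {..<2*m}" and cA: "card A = m"
  shows "1 - real m * exp (- (2^(m-1)) / 200) \<le> measure_pmf.prob (pmf_of_set (Pow ({..<2*m} - A) \<rightarrow>\<^sub>E (UNIV::bool set)))
           {b. far_from_juntas (2*m) 0.2 m (noFun (2*m) A b)}"
proof -
  define C where "C = {..<2*m} - A"
  define M where "M = pmf_of_set (Pow C \<rightarrow>\<^sub>E (UNIV::bool set))"
  define Bad where "Bad = (\<lambda>c. {b :: nat set \<Rightarrow> bool. real (card {y. y \<subseteq> C \<and> c \<in> y \<and> b y \<noteq> b (y - {c})}) < 0.45 * 2^(m-1)})"
  have fA: "finite A" using Asub finite_subset by blast
  have fC: "finite C" unfolding C_def by simp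
  have cC: "card C = m" unfolding C_def using Asub cA by (simp add: card_Diff_subset fA)
  have sub: "UNIV - (\<Union>c\<in>C. Bad c) \<subseteq> {b. far_from_juntas (2*m) 0.2 m (noFun (2*m) A b)}"
  proof
    fix b assume "b \<in> UNIV - (\<Union>c\<in>C. Bad c)"
    hence "\<forall>c\<in>{..<2*m} - A. real (card {y. y \<subseteq> {..<2*m} - A \<and> c \<in> y \<and> b y \<noteq> b (y - {c})}) \<ge> 0.45 * 2^(m-1)"
      unfolding Bad_def C_def by (auto simp: not_less)
    thus "b \<in> {b. far_from_juntas (2*m) 0.2 m (noFun (2*m) A b)}"
      using far_det[OF m Asub cA] by simp
  qed
  have "measure_pmf.prob M (\<Union>c\<in>C. Bad c) \<le> (\<Sum>c\<in>C. measure_pmf.prob M (Bad c))"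
    by (rule measure_pmf.finite_measure_subadditive_finite[OF fC]) auto
  also have "\<dots> \<le> (\<Sum>c\<in>C. exp (- (2^(m-1)) / 200))"
    by (intro sum_mono) (unfold M_def Bad_def, rule prob_bad[OF fC _ cC])
  also have "\<dots> = real m * exp (- (2^(m-1)) / 200)" using cC by simp
  finally have ub: "measure_pmf.prob M (\<Union>c\<in>C. Bad c) \<le> real m * exp (- (2^(m-1)) / 200)" .
  have "measure_pmf.prob M (UNIV - (\<Union>c\<in>C. Bad c)) = 1 - measure_pmf.prob M (\<Union>c\<in>C. Bad c)"
    using measure_pmf.prob_compl[of "\<Union>c\<in>C. Bad c" M] by simp
  moreover have "measure_pmf.prob M (UNIV - (\<Union>c\<in>C. Bad c)) \<le> measure_pmf.prob M {b. far_from_juntas (2*m) 0.2 m (noFun (2*m) A b)}"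
    by (rule measure_pmf.finite_measure_mono[OF sub]) simp
  ultimately show ?thesis using ub unfolding M_def C_def by linarith
qed

lemma per_m:
  assumes m: "m \<ge> 10000"
  shows "1 - real m * exp (- (2^m) / 400) \<le> measure_pmf.prob (D_no (2 * m)) {f. far_from_juntas (2 * m) 0.2 m f}"
proof -
  define SA where "SA = {A. A \<subseteq> {..<2*m} \<and> card A = 2*m div 2}"
  have e: "(2::real)^(m-1) / 200 = 2^m / 400"
  proof -
    have "m = Suc (m - 1)" using m by simp
    hence "(2::real)^m = 2 * 2^(m-1)" by (metis power.simps(2))
    thus ?thesis by simp
  qed
  have fSA: "finite SA" unfolding SA_def by (rule finite_subset[of _ "Pow {..<2*m}"]) auto
  have neSA: "SA \<noteq> {}"
  proof -
    have "{..<m} \<in> SA" unfolding SA_def by auto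
    thus ?thesis by auto
  qed
  show ?thesis
    unfolding D_no_def SA_def[symmetric]
  proof (rule bind_lower)
    fix A assume "A \<in> set_pmf (pmf_of_set SA)"
    hence A: "A \<subseteq> {..<2*m}" "card A = m" using fSA neSA unfolding SA_def by auto
    have bm: "bind_pmf (pmf_of_set (Pow ({..<2*m} - A) \<rightarrow>\<^sub>E (UNIV::bool set))) (\<lambda>b. return_pmf (noFun (2*m) A b))
        = map_pmf (noFun (2*m) A) (pmf_of_set (Pow ({..<2*m} - A) \<rightarrow>\<^sub>E (UNIV::bool set)))"
      by (simp add: map_pmf_def)
    have pm: "measure_pmf.prob (map_pmf (noFun (2*m) A) (pmf_of_set (Pow ({..<2*m} - A) \<rightarrow>\<^sub>E (UNIV::bool set)))) {f. far_from_juntas (2 * m) 0.2 m f}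
        = measure_pmf.prob (pmf_of_set (Pow ({..<2*m} - A) \<rightarrow>\<^sub>E (UNIV::bool set))) {b. far_from_juntas (2*m) 0.2 m (noFun (2*m) A b)}"
      by (simp add: measure_map_pmf vimage_def)
    have ee: "- ((2::real)^(m-1)) / 200 = - (2^m) / 400" using e by (simp only: minus_divide_left)
    have pa: "1 - real m * exp (- (2^m) / 400) \<le> measure_pmf.prob (pmf_of_set (Pow ({..<2*m} - A) \<rightarrow>\<^sub>E (UNIV::bool set))) {b. far_from_juntas (2*m) 0.2 m (noFun (2*m) A b)}"
      using per_A[OF m A] unfolding ee .
    show "1 - real m * exp (- (2^m) / 400) \<le> measure_pmf.prob (bind_pmf (pmf_of_set (Pow ({..<2*m} - A) \<rightarrow>\<^sub>E (UNIV::bool set))) (\<lambda>b. return_pmf (noFun (2*m) A b))) {f. far_from_juntas (2 * m) 0.2 m f}"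
      unfolding bm pm by (rule pa)
  qed
qed

theorem mainTheorem12:
  shows "(\<lambda>m. measure_pmf.prob (D_no (2 * m))
            {f. far_from_juntas (2 * m) 0.2 m f}) \<longlonglongrightarrow> 1"
proof (rule tendsto_sandwich[OF _ _ lim1 tendsto_const])
  show "\<forall>\<^sub>F m in sequentially. 1 - real m * exp (- (2^m) / 400) \<le> measure_pmf.prob (D_no (2 * m)) {f. far_from_juntas (2 * m) 0.2 m f}"
    using eventually_ge_at_top[of "10000::nat"] by eventually_elim (rule per_m)
  show "\<forall>\<^sub>F m in sequentially. measure_pmf.prob (D_no (2 * m)) {f. far_from_juntas (2 * m) 0.2 m f} \<le> 1"
    by simp
qed


end
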